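(* Let $\alpha\in(0,\frac{\pi}{2}]$ and let $S$ be a finite set of line segments in the plane such that any two segments of $S$ that cross do so at angle $\alpha$. If $\frac{\pi}{\alpha}$ is irrational, or $\frac{\pi}{\alpha}=\frac{p}{q}$ with $\gcd(p,q)=1$ and $p$ even, then there exists a subset $S'\subset S$ of pairwise noncrossing segments with $|S'|\geq\frac12|S|$. Otherwise $\frac{\pi}{\alpha}=\frac{p}{q}$ with $\gcd(p,q)=1$ and $p=2k+1$ for some $k\in\mathbb{N}$, and then there exists a subset $S'\subset S$ of pairwise noncrossing segments with $|S'|\geq\frac{k}{2k+1}|S|$. This holds under either of the following two notions of crossing.
   Context: Segments in $S$ may overlap (intersect in a segment of positive length). Standard notion: two segments cross if they intersect in a single point lying in the relative interior of both. Relaxed notion: given $S$ and a set $V$ of segment endpoints, two segments of $S$ cross if they intersect in a single point that is not in $V$. Two segments cross at angle $\alpha$ if the lines containing them meet at angle $\alpha$ (equivalently $\pi-\alpha$). *)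

theory Defs
  imports "HOL-Analysis.Analysis"
begin

type_synonym point = "real^2"

definition is_segment :: "point set \<Rightarrow> bool" where
  "is_segment s \<longleftrightarrow> (\<exists>a b. a \<noteq> b \<and> s = closed_segment a b)"

definition seg_endpoints :: "point set set \<Rightarrow> point set" where
  "seg_endpoints S = {a. \<exists>s\<in>S. \<exists>b. a \<noteq> b \<and> s = closed_segment a b}"

definition crosses_std :: "point set \<Rightarrow> point set \<Rightarrow> bool" where
  "crosses_std s t \<longleftrightarrow> (\<exists>x. s \<inter> t = {x} \<and> x \<in> rel_interior s \<and> x \<in> rel_interior t)"

definition crosses_rel :: "point set \<Rightarrow> point set \<Rightarrow> point set \<Rightarrow> bool" where
  "crosses_rel V s t \<longleftrightarrow> (\<exists>x. s \<inter> t = {x} \<and> x \<notin> V)"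

definition vec_angle :: "point \<Rightarrow> point \<Rightarrow> real" where
  "vec_angle u v = arccos ((u \<bullet> v) / (norm u * norm v))"

text \<open>The lines containing segments s and t meet at angle alpha (equivalently pi - alpha).\<close>
definition seg_angle_is :: "real \<Rightarrow> point set \<Rightarrow> point set \<Rightarrow> bool" where
  "seg_angle_is \<alpha> s t \<longleftrightarrow> (\<exists>a b c d. a \<noteq> b \<and> c \<noteq> d \<and> s = closed_segment a b \<and> t = closed_segment c d \<and>
      (vec_angle (b - a) (d - c) = \<alpha> \<or> vec_angle (b - a) (d - c) = pi - \<alpha>))"

definition noncrossing :: "(point set \<Rightarrow> point set \<Rightarrow> bool) \<Rightarrow> point set set \<Rightarrow> bool" where
  "noncrossing cr S' \<longleftrightarrow> (\<forall>s\<in>S'. \<forall>t\<in>S'. \<not> cr s t)"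

end

theory Submission
  imports Defs
begin


lemma polar:
  fixes u :: point
  shows "\<exists>\<theta>. u$1 = norm u * cos \<theta> \<and> u$2 = norm u * sin \<theta>"
proof -
  define z where "z = Complex (u$1) (u$2)"
  have n1: "norm u = sqrt (u$1^2 + u$2^2)"
    by (simp add: norm_eq_sqrt_inner inner_vec_def sum_2 power2_eq_square)
  have n: "norm u = cmod z" unfolding n1 z_def complex_norm by simp
  show ?thesis
    using cos_Arg2pi[of z] sin_Arg2pi[of z] n unfolding z_def by (metis complex.sel)
qed

lemma inner_polar:
  fixes u v :: point
  assumes "u$1 = norm u * cos a" "u$2 = norm u * sin a"
     "v$1 = norm v * cos b" "v$2 = norm v * sin b"
  shows "u \<bullet> v = norm u * norm v * cos (a - b)"
  using assms by (simp add: inner_vec_def sum_2 cos_diff algebra_simps)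

lemma angle_rel:
  fixes u v :: point
  assumes "u \<noteq> 0" "v \<noteq> 0"
     "u$1 = norm u * cos a" "u$2 = norm u * sin a"
     "v$1 = norm v * cos b" "v$2 = norm v * sin b"
     "vec_angle u v = \<alpha> \<or> vec_angle u v = pi - \<alpha>"
  shows "\<exists>e\<in>{1,-1::real}. \<exists>m::int. b - a = e * \<alpha> + m * pi"
proof -
  have va: "vec_angle u v = arccos (cos (a - b))"
    using inner_polar[OF assms(3-6)] assms(1,2) by (simp add: vec_angle_def)
  have cc: "cos (vec_angle u v) = cos (a - b)"
    unfolding va by (simp add: cos_arccos)
  from assms(7) show ?thesis
  proof
    assume h: "vec_angle u v = \<alpha>"
    then have "cos (a - b) = cos \<alpha>" using cc by simp
    then obtain n where n: "n \<in> \<int>" "a - b = \<alpha> + 2*n*pi \<or> a - b = -\<alpha> + 2*n*pi"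
      by (auto simp: cos_eq)
    then obtain k::int where k: "n = of_int k" by (auto elim: Ints_cases)
    from n(2) show ?thesis
    proof
      assume "a - b = \<alpha> + 2*n*pi"
      then have "b - a = (-1) * \<alpha> + of_int (-2*k) * pi" using k by simp
      then show ?thesis by blast
    next
      assume "a - b = -\<alpha> + 2*n*pi"
      then have "b - a = 1 * \<alpha> + of_int (-2*k) * pi" using k by simp
      then show ?thesis by blast
    qed
  next
    assume h: "vec_angle u v = pi - \<alpha>"
    then have "cos (a - b) = cos (pi - \<alpha>)" using cc by simp
    then obtain n where n: "n \<in> \<int>" "a - b = (pi - \<alpha>) + 2*n*pi \<or> a - b = -(pi - \<alpha>) + 2*n*pi"
      unfolding cos_eq by blast
    then obtain k::int where k: "n = of_int k" by (auto elim: Ints_cases)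
    from n(2) show ?thesis
    proof
      assume "a - b = (pi - \<alpha>) + 2*n*pi"
      then have "b - a = 1 * \<alpha> + of_int (-2*k - 1) * pi" using k by (simp add: algebra_simps)
      then show ?thesis by blast
    next
      assume "a - b = -(pi - \<alpha>) + 2*n*pi"
      then have "b - a = (-1) * \<alpha> + of_int (1 - 2*k) * pi" using k by (simp add: algebra_simps)
      then show ?thesis by blast
    qed
  qed
qed

lemma polar_eq:
  fixes u v :: point
  assumes "u \<noteq> 0"
     "u$1 = norm u * cos a" "u$2 = norm u * sin a"
     "v$1 = norm v * cos b" "v$2 = norm v * sin b"
     "v = u \<or> v = - u"
  shows "\<exists>m::int. b - a = m * pi"
  using assms(6)
proof
  assume "v = u"
  then have "cos b = cos a \<and> sin b = sin a" using assms(1-5) by auto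
  then obtain n::int where "b = a + 2*pi*n" using sin_cos_eq_iff by blast
  then have "b - a = of_int (2*n) * pi" by simp
  then show ?thesis by blast
next
  assume "v = - u"
  then have "norm u * cos b = norm u * cos (a + pi) \<and> norm u * sin b = norm u * sin (a + pi)"
    using assms(1-5) by auto
  moreover have "norm u \<noteq> 0" using assms(1) by simp
  ultimately have "cos b = cos (a + pi) \<and> sin b = sin (a + pi)"
    using mult_left_cancel by blast
  then obtain n::int where "b = (a + pi) + 2*pi*n" using sin_cos_eq_iff by blast
  then have "b - a = of_int (2*n+1) * pi" by (simp add: algebra_simps)
  then show ?thesis by blast
qed

definition angset :: "point set \<Rightarrow> real set" where
  "angset s = {\<theta>. \<exists>a b. a \<noteq> b \<and> s = closed_segment a b \<and>
      (b-a)$1 = norm (b-a) * cos \<theta> \<and> (b-a)$2 = norm (b-a) * sin \<theta>}"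

definition dir :: "point set \<Rightarrow> real" where
  "dir s = (SOME \<theta>. \<theta> \<in> angset s)"

lemma angset_rep:
  assumes "a \<noteq> b" "s = closed_segment a b"
    "(b-a)$1 = norm (b-a) * cos \<theta>" "(b-a)$2 = norm (b-a) * sin \<theta>"
  shows "\<exists>m::int. dir s - \<theta> = m * pi"
proof -
  have "\<theta> \<in> angset s" using assms unfolding angset_def by blast
  then have "dir s \<in> angset s" unfolding dir_def by (rule someI)
  then obtain c d where cd: "c \<noteq> d" "s = closed_segment c d"
      "(d-c)$1 = norm (d-c) * cos (dir s)" "(d-c)$2 = norm (d-c) * sin (dir s)"
    unfolding angset_def by blast
  have "{a,b} = {c,d}" using assms(2) cd(2) by simp
  then have "d - c = b - a \<or> d - c = - (b - a)"
    by (auto simp: doubleton_eq_iff)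
  moreover have "b - a \<noteq> 0" using assms(1) by simp
  ultimately show ?thesis using polar_eq[of "b-a" \<theta> "d-c" "dir s"] assms(3,4) cd(3,4) by blast
qed

lemma seg_angle_dir:
  assumes "seg_angle_is \<alpha> s t"
  shows "\<exists>e\<in>{1,-1::real}. \<exists>m::int. dir t - dir s = e * \<alpha> + m * pi"
proof -
  obtain a b c d where h: "a \<noteq> b" "c \<noteq> d" "s = closed_segment a b" "t = closed_segment c d"
      "vec_angle (b - a) (d - c) = \<alpha> \<or> vec_angle (b - a) (d - c) = pi - \<alpha>"
    using assms unfolding seg_angle_is_def by blast
  obtain x where x: "(b-a)$1 = norm (b-a) * cos x" "(b-a)$2 = norm (b-a) * sin x"
    using polar by blast
  obtain y where y: "(d-c)$1 = norm (d-c) * cos y" "(d-c)$2 = norm (d-c) * sin y"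
    using polar by blast
  obtain e m where em: "e\<in>{1,-1::real}" "y - x = e * \<alpha> + of_int m * pi"
    using angle_rel[of "b-a" "d-c" x y \<alpha>] h(1,2,5) x y by fastforce
  obtain m1::int where m1: "dir s - x = m1 * pi" using angset_rep[OF h(1,3) x] by blast
  obtain m2::int where m2: "dir t - y = m2 * pi" using angset_rep[OF h(2,4) y] by blast
  have "dir t - dir s = e * \<alpha> + of_int (m + m2 - m1) * pi"
    using em m1 m2 by (simp add: algebra_simps)
  then show ?thesis using em(1) by blast
qed



definition orel :: "real \<Rightarrow> real \<Rightarrow> real \<Rightarrow> bool" where
  "orel \<alpha> x y \<longleftrightarrow> (\<exists>n m::int. y - x = of_int n * \<alpha> + of_int m * pi)"

definition orep :: "real \<Rightarrow> real \<Rightarrow> real" where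
  "orep \<alpha> \<theta> = (SOME x. orel \<alpha> x \<theta>)"

definition oidx :: "real \<Rightarrow> real \<Rightarrow> int" where
  "oidx \<alpha> \<theta> = (SOME n::int. \<exists>m::int. \<theta> - orep \<alpha> \<theta> = of_int n * \<alpha> + of_int m * pi)"

lemma orel_refl: "orel \<alpha> x x"
  unfolding orel_def by (rule exI[of _ 0], rule exI[of _ 0]) simp

lemma orel_sym: "orel \<alpha> x y \<Longrightarrow> orel \<alpha> y x"
  unfolding orel_def
proof (elim exE)
  fix n m :: int assume "y - x = of_int n * \<alpha> + of_int m * pi"
  then have "x - y = of_int (-n) * \<alpha> + of_int (-m) * pi" by simp
  then show "\<exists>n m::int. x - y = of_int n * \<alpha> + of_int m * pi" by blast
qed

lemma orel_trans: "orel \<alpha> x y \<Longrightarrow> orel \<alpha> y z \<Longrightarrow> orel \<alpha> x z"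
  unfolding orel_def
proof (elim exE)
  fix n m n' m' :: int assume "y - x = of_int n * \<alpha> + of_int m * pi"
    "z - y = of_int n' * \<alpha> + of_int m' * pi"
  then have "z - x = of_int (n + n') * \<alpha> + of_int (m + m') * pi" by (simp add: algebra_simps)
  then show "\<exists>n m::int. z - x = of_int n * \<alpha> + of_int m * pi" by blast
qed

lemma orep_eq: assumes "orel \<alpha> \<theta> \<theta>'" shows "orep \<alpha> \<theta> = orep \<alpha> \<theta>'"
proof -
  have "(\<lambda>x. orel \<alpha> x \<theta>) = (\<lambda>x. orel \<alpha> x \<theta>')"
    using assms orel_sym orel_trans by blast
  then show ?thesis unfolding orep_def by simp
qed

lemma oidx_spec: "\<exists>m::int. \<theta> - orep \<alpha> \<theta> = of_int (oidx \<alpha> \<theta>) * \<alpha> + of_int m * pi"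
proof -
  have "orel \<alpha> (orep \<alpha> \<theta>) \<theta>" unfolding orep_def by (rule someI, rule orel_refl)
  then have "\<exists>n::int. \<exists>m::int. \<theta> - orep \<alpha> \<theta> = of_int n * \<alpha> + of_int m * pi"
    unfolding orel_def by blast
  then show ?thesis unfolding oidx_def by (rule someI_ex)
qed

lemma oidx_diff:
  assumes "\<theta>' - \<theta> = of_int n * \<alpha> + of_int m * pi"
  shows "\<exists>m'::int. of_int (oidx \<alpha> \<theta>' - oidx \<alpha> \<theta> - n) * \<alpha> = of_int m' * pi"
proof -
  have "orel \<alpha> \<theta> \<theta>'" using assms unfolding orel_def by blast
  then have r: "orep \<alpha> \<theta> = orep \<alpha> \<theta>'" by (rule orep_eq)
  obtain m1::int where m1: "\<theta> - orep \<alpha> \<theta> = of_int (oidx \<alpha> \<theta>) * \<alpha> + of_int m1 * pi"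
    using oidx_spec by blast
  obtain m2::int where m2: "\<theta>' - orep \<alpha> \<theta>' = of_int (oidx \<alpha> \<theta>') * \<alpha> + of_int m2 * pi"
    using oidx_spec by blast
  have "of_int (oidx \<alpha> \<theta>' - oidx \<alpha> \<theta> - n) * \<alpha> = of_int (m - m2 + m1) * pi"
    using assms m1 m2 r by (simp add: algebra_simps)
  then show ?thesis by blast
qed

lemma rat_case:
  assumes "0 < \<alpha>" "q > 0" "pi / \<alpha> = real p / real q" "coprime p q"
    "of_int k * \<alpha> = of_int m' * pi"
  shows "int p dvd k"
proof -
  have pp: "real p > 0"
  proof -
    have "pi / \<alpha> > 0" using assms(1) by simp
    then show ?thesis using assms(2,3) by (simp add: divide_pos_pos zero_less_divide_iff)
  qed
  have a: "\<alpha> = real q * pi / real p" using assms(1-3) pp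
    by (simp add: field_simps)
  have "of_int k * real q * pi / real p = of_int m' * pi" using assms(5) a by simp
  then have "of_int k * real q = of_int m' * real p" using pp by (simp add: field_simps)
  then have "k * int q = m' * int p"
    by (metis of_int_eq_iff of_int_mult of_int_of_nat_eq)
  then have "int p dvd k * int q" by simp
  moreover have "coprime (int p) (int q)" using assms(4) by simp
  ultimately show ?thesis using coprime_dvd_mult_left_iff by blast
qed

lemma irr_case:
  assumes "0 < \<alpha>" "pi / \<alpha> \<notin> \<rat>" "of_int k * \<alpha> = of_int m' * pi"
  shows "k = 0"
proof (rule ccontr)
  assume "k \<noteq> 0"
  then have "of_int k * \<alpha> \<noteq> 0" using assms(1) by simp
  then have "of_int m' * pi \<noteq> 0" using assms(3) by simp
  then have "m' \<noteq> 0" by auto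
  then have "pi / \<alpha> = of_int k / of_int m'" using assms(1,3) by (simp add: field_simps)
  then have "pi / \<alpha> \<in> \<rat>" by simp
  then show False using assms(2) by blast
qed



lemma half_lemma:
  fixes J :: "point set \<Rightarrow> int"
  assumes "finite S" "\<forall>s\<in>S. \<forall>t\<in>S. cr s t \<longrightarrow> odd (J t - J s)"
  shows "\<exists>S' \<subseteq> S. noncrossing cr S' \<and> real (card S') \<ge> real (card S) / 2"
proof -
  define A where "A = {s\<in>S. even (J s)}"
  define B where "B = {s\<in>S. odd (J s)}"
  have h1: "card A + card B = card S"
  proof -
    have "A \<union> B = S" "A \<inter> B = {}" unfolding A_def B_def by auto
    then show ?thesis using assms(1) card_Un_disjoint[of A B]
      by (metis finite_Un)
  qed
  have h2: "noncrossing cr A" using assms(2) unfolding noncrossing_def A_def by fastforce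
  have h3: "noncrossing cr B" using assms(2) unfolding noncrossing_def B_def by fastforce
  have h4: "A \<subseteq> S" "B \<subseteq> S" unfolding A_def B_def by auto
  show ?thesis
  proof (cases "card A \<ge> card B")
    case True
    then show ?thesis using h1 h2 h3 h4 by (intro exI[of _ A]) auto
  next
    case False
    then show ?thesis using h1 h2 h3 h4 by (intro exI[of _ B]) auto
  qed
qed

lemma par_contra:
  fixes x y e :: int
  assumes "0 \<le> x" "x < 2*k" "0 \<le> y" "y < 2*k" "even x = even y" "e = 1 \<or> e = -1"
    "(2*k+1) dvd (y - x - e)"
  shows False
proof -
  obtain r where r: "y - x - e = (2*k+1) * r" using assms(7) by blast
  have "r = 0"
  proof (rule ccontr)
    assume "r \<noteq> 0"
    then have "r \<ge> 1 \<or> r \<le> -1" by linarith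
    then show False
    proof
      assume "r \<ge> 1"
      then have "(2*k+1) * r \<ge> 2*k+1" using assms(1,2) by (simp add: mult_le_cancel_left1)
      then show False using r assms by linarith
    next
      assume "r \<le> -1"
      then have "(2*k+1) * r \<le> -(2*k+1)" using assms(1,2)
        by (smt (verit) mult_le_cancel_left1 mult_minus_right)
      then show False using r assms by linarith
    qed
  qed
  then have "y = x + e" using r by simp
  then show False using assms(5,6) by (auto simp: even_add)
qed

lemma odd_lemma:
  fixes J :: "point set \<Rightarrow> int" and k :: nat
  assumes "finite S"
    "\<forall>s\<in>S. \<forall>t\<in>S. cr s t \<longrightarrow> (\<exists>e\<in>{1,-1::int}. int (2*k+1) dvd (J t - J s - e))"
  shows "\<exists>S' \<subseteq> S. noncrossing cr S' \<and> real (card S') \<ge> real k / real (2 * k + 1) * real (card S)"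
proof -
  define p :: int where "p = int (2*k+1)"
  have p1: "p \<ge> 1" unfolding p_def by simp
  define C where "C c = {s\<in>S. J s mod p = c}" for c
  have fin: "finite (C c)" for c using assms(1) unfolding C_def by simp
  have SU: "S = (\<Union>c\<in>{0..<p}. C c)"
    unfolding C_def using p1 by auto
  have "card S = (\<Sum>c\<in>{0..<p}. card (C c))"
    unfolding SU by (rule card_UN_disjoint) (auto simp: C_def assms(1))
  have "\<exists>c\<in>{0..<p}. p * int (card (C c)) \<le> int (card S)"
  proof (rule ccontr)
    assume "\<not> ?thesis"
    then have lt: "\<forall>c\<in>{0..<p}. int (card S) < p * int (card (C c))" by auto
    have "(\<Sum>c\<in>{0..<p}. int (card S)) < (\<Sum>c\<in>{0..<p}. p * int (card (C c)))"
      by (rule sum_strict_mono) (use lt p1 in auto)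
    also have "\<dots> = p * int (card S)"
      using \<open>card S = _\<close> by (simp add: sum_distrib_left[symmetric])
    finally show False using p1 by simp
  qed
  then obtain c where c: "0 \<le> c" "c < p" "p * int (card (C c)) \<le> int (card S)" by auto
  define j where "j s = (J s - c - 1) mod p" for s
  have j_rng: "0 \<le> j s" "j s < p" for s unfolding j_def using p1 by auto
  define A where "A = {s\<in>S. j s < 2*int k \<and> even (j s)}"
  define B where "B = {s\<in>S. j s < 2*int k \<and> odd (j s)}"
  have jc: "j s = 2 * int k \<longleftrightarrow> J s mod p = c" for s
  proof -
    have "j s = 2 * int k \<longleftrightarrow> (J s - c - 1) mod p = (p - 1) mod p"
      unfolding j_def p_def by simp
    also have "\<dots> \<longleftrightarrow> (J s - c - 1 - (p - 1)) mod p = 0"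
      by (simp only: mod_eq_dvd_iff dvd_eq_mod_eq_0)
    also have "\<dots> \<longleftrightarrow> (J s - c) mod p = 0"
    proof -
      have "J s - c - 1 - (p - 1) = (J s - c) - p" by simp
      then show ?thesis by (metis minus_mod_self2)
    qed
    also have "\<dots> \<longleftrightarrow> J s mod p = c mod p" by (simp only: mod_eq_dvd_iff dvd_eq_mod_eq_0)
    also have "\<dots> \<longleftrightarrow> J s mod p = c" using c by simp
    finally show ?thesis .
  qed
  have AB: "A \<union> B = S - C c" "A \<inter> B = {}"
  proof -
    show "A \<union> B = S - C c"
    proof
      show "A \<union> B \<subseteq> S - C c"
      proof
        fix s assume "s \<in> A \<union> B"
        then have "s \<in> S" "j s \<noteq> 2 * int k" unfolding A_def B_def by auto
        then show "s \<in> S - C c" using jc[of s] unfolding C_def by auto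
      qed
      show "S - C c \<subseteq> A \<union> B"
      proof
        fix s assume "s \<in> S - C c"
        then have "s \<in> S" "j s \<noteq> 2 * int k" using jc unfolding C_def by auto
        moreover have "j s < 2 * int k + 1" using j_rng[of s] unfolding p_def by simp
        ultimately show "s \<in> A \<union> B" unfolding A_def B_def by auto
      qed
    qed
    show "A \<inter> B = {}" unfolding A_def B_def by auto
  qed
  have CS: "C c \<subseteq> S" unfolding C_def by auto
  have cardAB: "card A + card B = card S - card (C c)"
    using card_Un_disjoint[of A B] AB card_Diff_subset[OF fin CS] assms(1)
    by (metis finite_Diff finite_Un)
  have cle: "card (C c) \<le> card S" using card_mono[OF assms(1) CS] .
  have jd: "p dvd (j t - j s - e)" if "p dvd (J t - J s - e)" for s t e
  proof -
    have "(j t - j s - e) mod p = ((J t - c - 1) - (J s - c - 1) - e) mod p"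
      unfolding j_def by (metis mod_diff_eq mod_diff_left_eq)
    also have "\<dots> = (J t - J s - e) mod p" by (simp add: algebra_simps)
    finally show ?thesis using that by (simp only: dvd_eq_mod_eq_0)
  qed
  have ncA: "noncrossing cr A"
    unfolding noncrossing_def
  proof (intro ballI notI)
    fix s t assume st: "s \<in> A" "t \<in> A" "cr s t"
    then obtain e where e: "e \<in> {1,-1::int}" "p dvd (J t - J s - e)"
      using assms(2) unfolding A_def p_def by blast
    have d: "2 * int k + 1 dvd (j t - j s - e)" using jd[OF e(2)] unfolding p_def by (simp add: add.commute)
    have r: "0 \<le> j s" "j s < 2 * int k" "0 \<le> j t" "j t < 2 * int k" "even (j s) = even (j t)"
      using st(1,2) j_rng unfolding A_def by auto
    have "e = 1 \<or> e = -1" using e(1) by auto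
    then show False using par_contra[OF r _ d] by blast
  qed
  have ncB: "noncrossing cr B"
    unfolding noncrossing_def
  proof (intro ballI notI)
    fix s t assume st: "s \<in> B" "t \<in> B" "cr s t"
    then obtain e where e: "e \<in> {1,-1::int}" "p dvd (J t - J s - e)"
      using assms(2) unfolding B_def p_def by blast
    have d: "2 * int k + 1 dvd (j t - j s - e)" using jd[OF e(2)] unfolding p_def by (simp add: add.commute)
    have r: "0 \<le> j s" "j s < 2 * int k" "0 \<le> j t" "j t < 2 * int k" "even (j s) = even (j t)"
      using st(1,2) j_rng unfolding B_def by auto
    have "e = 1 \<or> e = -1" using e(1) by auto
    then show False using par_contra[OF r _ d] by blast
  qed
  have sub: "A \<subseteq> S" "B \<subseteq> S" unfolding A_def B_def by auto
  have key: "real (card A) + real (card B) \<ge> 2 * (real k / real (2 * k + 1) * real (card S))"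
  proof -
    have r1: "real (2*k+1) * real (card (C c)) \<le> real (card S)"
      using c(3) unfolding p_def by (metis of_int_le_iff of_int_mult of_int_of_nat_eq)
    have "real (card A) + real (card B) = real (card S) - real (card (C c))"
      using cardAB cle by (metis of_nat_add of_nat_diff)
    moreover have "2 * (real k / real (2 * k + 1) * real (card S))
        = real (card S) - real (card S) / real (2*k+1)"
      by (simp add: field_simps)
    moreover have "real (card (C c)) \<le> real (card S) / real (2*k+1)"
      using r1 by (simp add: field_simps)
    ultimately show ?thesis by linarith
  qed
  show ?thesis
  proof (cases "card A \<ge> card B")
    case True
    then show ?thesis using key sub ncA by (intro exI[of _ A]) auto
  next
    case False
    then show ?thesis using key sub ncB by (intro exI[of _ B]) auto
  qed
qed


theorem lemma15:
  fixes \<alpha> :: real and S :: "point set set" and cr :: "point set \<Rightarrow> point set \<Rightarrow> bool"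
  assumes "0 < \<alpha>" "\<alpha> \<le> pi / 2"
    and "finite S" "\<forall>s\<in>S. is_segment s"
    and "cr = crosses_std \<or> (\<exists>V. V \<subseteq> seg_endpoints S \<and> cr = crosses_rel V)"
    and "\<forall>s\<in>S. \<forall>t\<in>S. cr s t \<longrightarrow> seg_angle_is \<alpha> s t"
  shows "((pi / \<alpha> \<notin> \<rat> \<or> (\<exists>p q :: nat. q > 0 \<and> coprime p q \<and> pi / \<alpha> = real p / real q \<and> even p)) \<longrightarrow>
           (\<exists>S' \<subseteq> S. noncrossing cr S' \<and> real (card S') \<ge> real (card S) / 2)) \<and>
         (\<forall>p q k :: nat. q > 0 \<and> coprime p q \<and> pi / \<alpha> = real p / real q \<and> p = 2 * k + 1 \<longrightarrow>
           (\<exists>S' \<subseteq> S. noncrossing cr S' \<and> real (card S') \<ge> real k / real (2 * k + 1) * real (card S)))"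
proof -
  define J where "J s = oidx \<alpha> (dir s)" for s
  have crA: "\<exists>n::int. (n = 1 \<or> n = -1) \<and> (\<exists>m'::int. of_int (J t - J s - n) * \<alpha> = of_int m' * pi)"
    if "s \<in> S" "t \<in> S" "cr s t" for s t
  proof -
    have "seg_angle_is \<alpha> s t" using assms(6) that by blast
    then obtain e m where em: "e \<in> {1,-1::real}" "dir t - dir s = e * \<alpha> + of_int m * pi"
      using seg_angle_dir by blast
    obtain n::int where n: "n = 1 \<or> n = -1" "e = of_int n"
    proof (cases "e = 1")
      case True
      then show ?thesis using that[of 1] by simp
    next
      case False
      then have "e = -1" using em(1) by simp
      then show ?thesis using that[of "-1"] by simp
    qed
    have "dir t - dir s = of_int n * \<alpha> + of_int m * pi" using em n by simp
    from oidx_diff[OF this] show ?thesis using n(1) unfolding J_def by blast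
  qed
  show ?thesis
  proof (intro conjI impI allI)
    assume h: "pi / \<alpha> \<notin> \<rat> \<or> (\<exists>p q :: nat. q > 0 \<and> coprime p q \<and> pi / \<alpha> = real p / real q \<and> even p)"
    have "\<forall>s\<in>S. \<forall>t\<in>S. cr s t \<longrightarrow> odd (J t - J s)"
    proof (intro ballI impI)
      fix s t assume st: "s \<in> S" "t \<in> S" "cr s t"
      obtain n m' where nm: "n = 1 \<or> n = -1" "of_int (J t - J s - n) * \<alpha> = of_int m' * pi"
        using crA[OF st] by blast
      have "even (J t - J s - n)"
        using h
      proof
        assume "pi / \<alpha> \<notin> \<rat>"
        then have "J t - J s - n = 0" using irr_case[OF assms(1) _ nm(2)] by blast
        then show ?thesis by simp
      next
        assume "\<exists>p q :: nat. q > 0 \<and> coprime p q \<and> pi / \<alpha> = real p / real q \<and> even p"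
        then obtain p q :: nat where pq: "q > 0" "coprime p q" "pi / \<alpha> = real p / real q" "even p"
          by blast
        have "int p dvd (J t - J s - n)" using rat_case[OF assms(1) pq(1) pq(3) pq(2) nm(2)] .
        moreover have "2 dvd int p" using pq(4) by simp
        ultimately show ?thesis using dvd_trans by blast
      qed
      then show "odd (J t - J s)" using nm(1) by auto
    qed
    then show "\<exists>S' \<subseteq> S. noncrossing cr S' \<and> real (card S') \<ge> real (card S) / 2"
      using half_lemma[OF assms(3)] by blast
  next
    fix p q k :: nat
    assume h: "q > 0 \<and> coprime p q \<and> pi / \<alpha> = real p / real q \<and> p = 2 * k + 1"
    have "\<forall>s\<in>S. \<forall>t\<in>S. cr s t \<longrightarrow> (\<exists>e\<in>{1,-1::int}. int (2*k+1) dvd (J t - J s - e))"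
    proof (intro ballI impI)
      fix s t assume st: "s \<in> S" "t \<in> S" "cr s t"
      obtain n m' where nm: "n = 1 \<or> n = -1" "of_int (J t - J s - n) * \<alpha> = of_int m' * pi"
        using crA[OF st] by blast
      have "int p dvd (J t - J s - n)" using rat_case[OF assms(1) _ _ _ nm(2), of q p] h by blast
      then show "\<exists>e\<in>{1,-1::int}. int (2*k+1) dvd (J t - J s - e)" using nm(1) h by auto
    qed
    then show "\<exists>S' \<subseteq> S. noncrossing cr S' \<and> real (card S') \<ge> real k / real (2 * k + 1) * real (card S)"
      using odd_lemma[OF assms(3)] by blast
  qed
qed

end
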